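(* Let $G$ be a row stratified grid-labelled graph of type $(a,b)$, and for $1\le i<a$ let $S_i$ be the grid-labelled graph of type $(a,b)$ whose edges are the diagonal edges of $G$ with one endpoint in row $i$ and the other in row $i+1$. If $G$ satisfies the degree criterion, then each $S_i$ satisfies the degree criterion. The analogous statement holds for column stratified graphs, with $S_j$ ($1\le j<b$) consisting of the diagonal edges between columns $j$ and $j+1$.
   Context: A grid-labelled graph of type $(a,b)$ is a simple graph whose vertex set is the grid $[a]\times[b]$. An edge $\{(i,j),(k,l)\}$ is diagonal if $i\neq k$ and $j\neq l$. $G$ is row stratified if every diagonal edge $\{(i,j),(k,l)\}$ satisfies $|i-k|=1$, and column stratified if every diagonal edge satisfies $|j-l|=1$. The partial transpose $\Gamma(G)$ is the grid-labelled graph with edge set $\{\{(k,j),(i,l)\}:\{(i,j),(k,l)\}\in E(G)\}$; $G$ satisfies the degree criterion if every vertex has the same degree in $G$ and in $\Gamma(G)$. *)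

theory Defs
  imports Main
begin

type_synonym vertex = "nat \<times> nat"
type_synonym edgeset = "vertex set set"

definition grid :: "nat \<Rightarrow> nat \<Rightarrow> vertex set" where
  "grid a b = {1..a} \<times> {1..b}"

definition grid_graph :: "nat \<Rightarrow> nat \<Rightarrow> edgeset \<Rightarrow> bool" where
  "grid_graph a b E \<longleftrightarrow> (\<forall>e\<in>E. \<exists>u v. e = {u, v} \<and> u \<noteq> v \<and> u \<in> grid a b \<and> v \<in> grid a b)"

definition diagonal :: "vertex set \<Rightarrow> bool" where
  "diagonal e \<longleftrightarrow> (\<exists>i j k l. e = {(i,j),(k,l)} \<and> i \<noteq> k \<and> j \<noteq> l)"

definition row_stratified :: "edgeset \<Rightarrow> bool" where
  "row_stratified E \<longleftrightarrow>
     (\<forall>i j k l. {(i,j),(k,l)} \<in> E \<and> i \<noteq> k \<and> j \<noteq> l \<longrightarrow> (i = k + 1 \<or> k = i + 1))"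

definition col_stratified :: "edgeset \<Rightarrow> bool" where
  "col_stratified E \<longleftrightarrow>
     (\<forall>i j k l. {(i,j),(k,l)} \<in> E \<and> i \<noteq> k \<and> j \<noteq> l \<longrightarrow> (j = l + 1 \<or> l = j + 1))"

definition partial_transpose :: "edgeset \<Rightarrow> edgeset" where
  "partial_transpose E = {{(k,j),(i,l)} | i j k l. {(i,j),(k,l)} \<in> E}"

definition degree :: "edgeset \<Rightarrow> vertex \<Rightarrow> nat" where
  "degree E v = card {e \<in> E. v \<in> e}"

definition degree_criterion :: "nat \<Rightarrow> nat \<Rightarrow> edgeset \<Rightarrow> bool" where
  "degree_criterion a b E \<longleftrightarrow>
     (\<forall>v\<in>grid a b. degree E v = degree (partial_transpose E) v)"

definition row_slice :: "edgeset \<Rightarrow> nat \<Rightarrow> edgeset" where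
  "row_slice E i = {e \<in> E. diagonal e \<and> (\<exists>j l. e = {(i,j),(i+1,l)})}"

definition col_slice :: "edgeset \<Rightarrow> nat \<Rightarrow> edgeset" where
  "col_slice E j = {e \<in> E. diagonal e \<and> (\<exists>i k. e = {(i,j),(k,j+1)})}"

end

theory Submission
  imports Defs
begin

definition proper :: "edgeset \<Rightarrow> bool" where
  "proper F \<longleftrightarrow> (\<forall>e\<in>F. \<exists>x y. e = {x,y} \<and> x \<noteq> y)"

lemma deg_nb:
  assumes "proper F"
  shows "degree F v = card {w. w \<noteq> v \<and> {v,w} \<in> F}"
proof -
  have "bij_betw (\<lambda>w. {v,w}) {w. w \<noteq> v \<and> {v,w} \<in> F} {e\<in>F. v \<in> e}"
  proof (rule bij_betwI')
    fix x y assume "x \<in> {w. w \<noteq> v \<and> {v,w} \<in> F}" "y \<in> {w. w \<noteq> v \<and> {v,w} \<in> F}"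
    then show "({v, x} = {v, y}) = (x = y)" by (metis doubleton_eq_iff mem_Collect_eq)
  next
    fix x assume "x \<in> {w. w \<noteq> v \<and> {v,w} \<in> F}" then show "{v,x} \<in> {e\<in>F. v \<in> e}" by simp
  next
    fix e assume e: "e \<in> {e\<in>F. v \<in> e}"
    have eF: "e \<in> F" and ve: "v \<in> e" using e by auto
    obtain x y where xy: "e = {x,y}" "x \<noteq> y" using assms eF unfolding proper_def by meson
    show "\<exists>w\<in>{w. w \<noteq> v \<and> {v,w} \<in> F}. e = {v, w}"
    proof (cases "v = x")
      case True
      then have "y \<in> {w. w \<noteq> v \<and> {v,w} \<in> F}" "e = {v,y}" using eF xy by auto
      then show ?thesis by blast
    next
      case False
      then have "v = y" using ve xy by auto
      then have "x \<in> {w. w \<noteq> v \<and> {v,w} \<in> F}" "e = {v,x}" using eF xy by (auto simp: insert_commute)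
      then show ?thesis by blast
    qed
  qed
  then have "card {w. w \<noteq> v \<and> {v,w} \<in> F} = card {e\<in>F. v \<in> e}" by (rule bij_betw_same_card)
  then show ?thesis unfolding degree_def by (rule sym)
qed
lemma memG: "{(r,c),(p,q)} \<in> partial_transpose F \<longleftrightarrow> {(p,c),(r,q)} \<in> F"
proof
  assume "{(r,c),(p,q)} \<in> partial_transpose F"
  then obtain i j k l where h: "{(r,c),(p,q)} = {(k,j),(i,l)}" "{(i,j),(k,l)} \<in> F"
    unfolding partial_transpose_def by blast
  from h(1) have "((r,c) = (k,j) \<and> (p,q) = (i,l)) \<or> ((r,c) = (i,l) \<and> (p,q) = (k,j))"
    by (simp add: doubleton_eq_iff)
  then show "{(p,c),(r,q)} \<in> F" using h(2) by (auto simp: insert_commute)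
next
  assume "{(p,c),(r,q)} \<in> F"
  then show "{(r,c),(p,q)} \<in> partial_transpose F" unfolding partial_transpose_def by blast
qed

lemma diag2: "diagonal {(r,c),(p,q)} \<longleftrightarrow> r \<noteq> p \<and> c \<noteq> q"
proof
  assume "diagonal {(r,c),(p,q)}"
  then obtain i j k l where h: "{(r,c),(p,q)} = {(i,j),(k,l)}" "i \<noteq> k" "j \<noteq> l"
    unfolding diagonal_def by blast
  from h(1) have "((r,c) = (i,j) \<and> (p,q) = (k,l)) \<or> ((r,c) = (k,l) \<and> (p,q) = (i,j))"
    by (simp add: doubleton_eq_iff)
  then show "r \<noteq> p \<and> c \<noteq> q" using h by auto
next
  assume "r \<noteq> p \<and> c \<noteq> q" then show "diagonal {(r,c),(p,q)}" unfolding diagonal_def by blast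
qed

lemma grid_proper: assumes "grid_graph a b E" shows "proper E"
  unfolding proper_def
proof
  fix e assume "e \<in> E"
  then obtain u v where "e = {u, v}" "u \<noteq> v" using assms unfolding grid_graph_def by meson
  then show "\<exists>x y. e = {x,y} \<and> x \<noteq> y" by blast
qed

lemma slice_mem: "{(r,c),(p,q)} \<in> row_slice E i \<longleftrightarrow>
   {(r,c),(p,q)} \<in> E \<and> c \<noteq> q \<and> ((r = i \<and> p = Suc i) \<or> (r = Suc i \<and> p = i))"
proof -
  have "(\<exists>j l. {(r,c),(p,q)} = {(i,j),(i+1,l)}) \<longleftrightarrow> ((r = i \<and> p = Suc i) \<or> (r = Suc i \<and> p = i))"
    by (auto simp: doubleton_eq_iff)
  moreover have "{(r,c),(p,q)} \<in> row_slice E i \<longleftrightarrow> {(r,c),(p,q)} \<in> E \<and> diagonal {(r,c),(p,q)} \<and> (\<exists>j l. {(r,c),(p,q)} = {(i,j),(i+1,l)})"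
    by (simp only: row_slice_def mem_Collect_eq)
  ultimately show ?thesis unfolding diag2 by auto
qed

lemma proper_sub: "proper F \<Longrightarrow> G \<subseteq> F \<Longrightarrow> proper G"
  unfolding proper_def by blast

lemma properG: "proper F \<Longrightarrow> proper (partial_transpose F)"
  unfolding proper_def partial_transpose_def by (fastforce simp: doubleton_eq_iff)

lemma edge_grid: assumes "grid_graph a b E" "{x,y} \<in> E" shows "x \<in> grid a b" "y \<in> grid a b"
proof -
  obtain u v where "{x,y} = {u,v}" "u \<in> grid a b" "v \<in> grid a b"
    using assms unfolding grid_graph_def by meson
  then show "x \<in> grid a b" "y \<in> grid a b" by (auto simp: doubleton_eq_iff)
qed

definition X :: "edgeset \<Rightarrow> nat \<Rightarrow> nat \<Rightarrow> nat" where
  "X E r c = card {q. q \<noteq> c \<and> {(r,c),(Suc r,q)} \<in> E}"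
definition Y :: "edgeset \<Rightarrow> nat \<Rightarrow> nat \<Rightarrow> nat" where
  "Y E r c = card {q. q \<noteq> c \<and> {(Suc r,c),(r,q)} \<in> E}"

lemma card3: assumes "finite (A \<union> B \<union> C)" "A \<inter> B = {}" "A \<inter> C = {}" "B \<inter> C = {}"
  shows "card (A \<union> B \<union> C) = card A + card B + card C"
proof -
  have "card (A \<union> B \<union> C) = card (A \<union> B) + card C"
    using assms by (intro card_Un_disjoint) auto
  also have "card (A \<union> B) = card A + card B" using assms by (intro card_Un_disjoint) auto
  finally show ?thesis .
qed

lemma card_row: "card ((\<lambda>q. (k::nat, q::nat)) ` S) = card S"
  by (rule card_image) (auto simp: inj_on_def)

lemma decomp:
  fixes p c :: nat
  assumes g: "grid_graph a b E" and rs: "row_stratified E"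
  defines "v \<equiv> (Suc p, c)"
  defines "N0 \<equiv> {w. w \<noteq> v \<and> {v,w} \<in> E \<and> (fst w = Suc p \<or> snd w = c)}"
  shows "degree E v = card N0 + X E (Suc p) c + Y E p c"
    and "degree (partial_transpose E) v = card N0 + Y E (Suc p) c + X E p c"
proof -
  have pr: "proper E" using g by (rule grid_proper)
  let ?N1 = "(\<lambda>q. (Suc (Suc p), q)) ` {q. q \<noteq> c \<and> {(Suc p,c),(Suc (Suc p),q)} \<in> E}"
  let ?N2 = "(\<lambda>q. (p, q)) ` {q. q \<noteq> c \<and> {(Suc p,c),(p,q)} \<in> E}"
  have strat: "p' = Suc (Suc p) \<or> p' = p" if "{(Suc p, c), (p', q')} \<in> E" "p' \<noteq> Suc p" "q' \<noteq> c" for p' q'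
    using rs that unfolding row_stratified_def by force
  have N: "{w. w \<noteq> v \<and> {v,w} \<in> E} = N0 \<union> ?N1 \<union> ?N2"
  proof (intro set_eqI iffI)
    fix w assume "w \<in> {w. w \<noteq> v \<and> {v,w} \<in> E}"
    moreover obtain p' q' where w: "w = (p',q')" by (cases w)
    ultimately show "w \<in> N0 \<union> ?N1 \<union> ?N2" using strat[of p' q'] unfolding N0_def v_def by auto
  qed (auto simp: N0_def v_def)
  have fin: "finite {w. w \<noteq> v \<and> {v,w} \<in> E}"
  proof (rule finite_subset)
    show "{w. w \<noteq> v \<and> {v,w} \<in> E} \<subseteq> grid a b" using edge_grid[OF g] by blast
    show "finite (grid a b)" unfolding grid_def by simp
  qed
  have "degree E v = card (N0 \<union> ?N1 \<union> ?N2)" by (simp only: deg_nb[OF pr] N)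
  also have "\<dots> = card N0 + card ?N1 + card ?N2"
  proof (rule card3)
    show "finite (N0 \<union> ?N1 \<union> ?N2)" using fin unfolding N .
  qed (auto simp: N0_def v_def)
  finally show "degree E v = card N0 + X E (Suc p) c + Y E p c"
    unfolding X_def Y_def card_row .
next
  have pr: "proper (partial_transpose E)" using g by (intro properG grid_proper)
  let ?N1 = "(\<lambda>q. (Suc (Suc p), q)) ` {q. q \<noteq> c \<and> {(Suc (Suc p),c),(Suc p,q)} \<in> E}"
  let ?N2 = "(\<lambda>q. (p, q)) ` {q. q \<noteq> c \<and> {(p,c),(Suc p,q)} \<in> E}"
  have strat: "p' = Suc (Suc p) \<or> p' = p" if "{(p', c), (Suc p, q')} \<in> E" "p' \<noteq> Suc p" "q' \<noteq> c" for p' q'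
    using rs that unfolding row_stratified_def by force
  have NG: "{w. w \<noteq> v \<and> {v,w} \<in> partial_transpose E} = {w. w \<noteq> v \<and> {(fst w, c),(Suc p, snd w)} \<in> E}"
    unfolding v_def by (auto simp: memG)
  have N: "{w. w \<noteq> v \<and> {(fst w, c),(Suc p, snd w)} \<in> E} = N0 \<union> ?N1 \<union> ?N2"
  proof (intro set_eqI iffI)
    fix w assume "w \<in> {w. w \<noteq> v \<and> {(fst w, c),(Suc p, snd w)} \<in> E}"
    moreover obtain p' q' where w: "w = (p',q')" by (cases w)
    ultimately have wE: "w = (p',q')" "(p',q') \<noteq> (Suc p, c)" "{(p', c),(Suc p, q')} \<in> E"
      unfolding v_def by auto
    show "w \<in> N0 \<union> ?N1 \<union> ?N2"
    proof (cases "p' = Suc p \<or> q' = c")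
      case True
      then have "{v, w} \<in> E" using wE unfolding v_def by (auto simp: insert_commute)
      then show ?thesis using True wE unfolding N0_def v_def by auto
    next
      case False
      then have "p' = Suc (Suc p) \<or> p' = p" using strat[of p' q'] wE by blast
      then show ?thesis
      proof
        assume "p' = Suc (Suc p)"
        then have "w \<in> ?N1" using wE False by (auto simp: insert_commute)
        then show ?thesis by blast
      next
        assume "p' = p"
        then have "w \<in> ?N2" using wE False by auto
        then show ?thesis by blast
      qed
    qed
  qed (auto simp: N0_def v_def insert_commute)
  have fin: "finite {w. w \<noteq> v \<and> {(fst w, c),(Suc p, snd w)} \<in> E}"
  proof (rule finite_subset)
    show "{w. w \<noteq> v \<and> {(fst w, c),(Suc p, snd w)} \<in> E} \<subseteq> grid a b"
    proof
      fix w assume "w \<in> {w. w \<noteq> v \<and> {(fst w, c),(Suc p, snd w)} \<in> E}"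
      then have "(fst w, c) \<in> grid a b" "(Suc p, snd w) \<in> grid a b" using edge_grid[OF g] by auto
      then show "w \<in> grid a b" unfolding grid_def by (cases w) auto
    qed
    show "finite (grid a b)" unfolding grid_def by simp
  qed
  have "degree (partial_transpose E) v = card (N0 \<union> ?N1 \<union> ?N2)" by (simp only: deg_nb[OF pr] NG N)
  also have "\<dots> = card N0 + card ?N1 + card ?N2"
  proof (rule card3)
    show "finite (N0 \<union> ?N1 \<union> ?N2)" using fin unfolding N .
  qed (auto simp: N0_def v_def)
  finally show "degree (partial_transpose E) v = card N0 + Y E (Suc p) c + X E p c"
    unfolding X_def Y_def card_row by (simp add: insert_commute)
qed


lemma XY0: assumes g: "grid_graph a b E" shows "X E 0 c = 0" "Y E 0 c = 0"
proof -
  have n0: "\<And>q. (0, q) \<notin> grid a b" unfolding grid_def by auto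
  then have "{q. q \<noteq> c \<and> {(0,c),(Suc 0,q)} \<in> E} = {}" "{q. q \<noteq> c \<and> {(Suc 0,c),(0,q)} \<in> E} = {}"
    using edge_grid[OF g] n0 by blast+
  then show "X E 0 c = 0" "Y E 0 c = 0" unfolding X_def Y_def by (simp only: card.empty)+
qed

lemma XYeq:
  assumes g: "grid_graph a b E" and rs: "row_stratified E" and dc: "degree_criterion a b E"
    and c: "c \<in> {1..b}"
  shows "p < a \<Longrightarrow> X E p c = Y E p c"
proof (induction p)
  case 0 then show ?case using XY0[OF g] by simp
next
  case (Suc p)
  then have IH: "X E p c = Y E p c" by simp
  have "(Suc p, c) \<in> grid a b" using Suc.prems c unfolding grid_def by auto
  then have "degree E (Suc p, c) = degree (partial_transpose E) (Suc p, c)"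
    using dc unfolding degree_criterion_def by blast
  then show ?case using decomp[OF g rs, of p c] IH by simp
qed

lemma slice_deg:
  assumes g: "grid_graph a b E"
  shows "degree (row_slice E i) (r,c) = (if r = i then X E i c else if r = Suc i then Y E i c else 0)"
    and "degree (partial_transpose (row_slice E i)) (r,c) = (if r = i then Y E i c else if r = Suc i then X E i c else 0)"
proof -
  have pS: "proper (row_slice E i)"
    by (rule proper_sub[OF grid_proper[OF g]]) (auto simp: row_slice_def)
  have "{w. w \<noteq> (r,c) \<and> {(r,c),w} \<in> row_slice E i} =
     (if r = i then (\<lambda>q. (Suc i, q)) ` {q. q \<noteq> c \<and> {(i,c),(Suc i,q)} \<in> E}
      else if r = Suc i then (\<lambda>q. (i, q)) ` {q. q \<noteq> c \<and> {(Suc i,c),(i,q)} \<in> E} else {})"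
  proof (intro set_eqI iffI)
    fix w assume "w \<in> {w. w \<noteq> (r,c) \<and> {(r,c),w} \<in> row_slice E i}"
    moreover obtain p q where "w = (p,q)" by (cases w)
    ultimately show "w \<in> (if r = i then (\<lambda>q. (Suc i, q)) ` {q. q \<noteq> c \<and> {(i,c),(Suc i,q)} \<in> E}
      else if r = Suc i then (\<lambda>q. (i, q)) ` {q. q \<noteq> c \<and> {(Suc i,c),(i,q)} \<in> E} else {})"
      by (auto simp: slice_mem)
  next
    fix w assume "w \<in> (if r = i then (\<lambda>q. (Suc i, q)) ` {q. q \<noteq> c \<and> {(i,c),(Suc i,q)} \<in> E}
      else if r = Suc i then (\<lambda>q. (i, q)) ` {q. q \<noteq> c \<and> {(Suc i,c),(i,q)} \<in> E} else {})"
    then show "w \<in> {w. w \<noteq> (r,c) \<and> {(r,c),w} \<in> row_slice E i}"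
      by (auto simp: slice_mem split: if_splits)
  qed
  then show "degree (row_slice E i) (r,c) = (if r = i then X E i c else if r = Suc i then Y E i c else 0)"
    unfolding deg_nb[OF pS] X_def Y_def by (simp add: card_row)
next
  have pS: "proper (partial_transpose (row_slice E i))"
    by (intro properG proper_sub[OF grid_proper[OF g]]) (auto simp: row_slice_def)
  have "{w. w \<noteq> (r,c) \<and> {(r,c),w} \<in> partial_transpose (row_slice E i)} =
     (if r = i then (\<lambda>q. (Suc i, q)) ` {q. q \<noteq> c \<and> {(Suc i,c),(i,q)} \<in> E}
      else if r = Suc i then (\<lambda>q. (i, q)) ` {q. q \<noteq> c \<and> {(i,c),(Suc i,q)} \<in> E} else {})"
  proof (intro set_eqI iffI)
    fix w assume "w \<in> {w. w \<noteq> (r,c) \<and> {(r,c),w} \<in> partial_transpose (row_slice E i)}"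
    moreover obtain p q where "w = (p,q)" by (cases w)
    ultimately show "w \<in> (if r = i then (\<lambda>q. (Suc i, q)) ` {q. q \<noteq> c \<and> {(Suc i,c),(i,q)} \<in> E}
      else if r = Suc i then (\<lambda>q. (i, q)) ` {q. q \<noteq> c \<and> {(i,c),(Suc i,q)} \<in> E} else {})"
      by (auto simp: slice_mem memG)
  next
    fix w assume "w \<in> (if r = i then (\<lambda>q. (Suc i, q)) ` {q. q \<noteq> c \<and> {(Suc i,c),(i,q)} \<in> E}
      else if r = Suc i then (\<lambda>q. (i, q)) ` {q. q \<noteq> c \<and> {(i,c),(Suc i,q)} \<in> E} else {})"
    then show "w \<in> {w. w \<noteq> (r,c) \<and> {(r,c),w} \<in> partial_transpose (row_slice E i)}"
      by (auto simp: slice_mem memG split: if_splits)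
  qed
  then show "degree (partial_transpose (row_slice E i)) (r,c) = (if r = i then Y E i c else if r = Suc i then X E i c else 0)"
    unfolding deg_nb[OF pS] X_def Y_def by (simp add: card_row)
qed

lemma row_part:
  assumes g: "grid_graph a b E" and rs: "row_stratified E" and dc: "degree_criterion a b E"
    and i: "i < a"
  shows "degree_criterion a b (row_slice E i)"
  unfolding degree_criterion_def
proof
  fix v assume v: "v \<in> grid a b"
  obtain r c where rc: "v = (r,c)" by (cases v)
  then have c: "c \<in> {1..b}" using v unfolding grid_def by auto
  have "X E i c = Y E i c" using XYeq[OF g rs dc c i] .
  then show "degree (row_slice E i) v = degree (partial_transpose (row_slice E i)) v"
    unfolding rc slice_deg[OF g] by simp
qed


definition SW :: "edgeset \<Rightarrow> edgeset" where
  "SW F = (\<lambda>e. prod.swap ` e) ` F"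

lemma swsw: "prod.swap ` prod.swap ` (e::vertex set) = e"
  by (simp add: image_comp)

lemma memSW: "e \<in> SW F \<longleftrightarrow> prod.swap ` e \<in> F"
proof
  assume "e \<in> SW F"
  then obtain e' where "e' \<in> F" "e = prod.swap ` e'" unfolding SW_def by blast
  then show "prod.swap ` e \<in> F" by (simp add: swsw)
next
  assume "prod.swap ` e \<in> F"
  then have "prod.swap ` (prod.swap ` e) \<in> SW F" unfolding SW_def by blast
  then show "e \<in> SW F" by (simp add: swsw)
qed

lemma memSW2: "{(i,j),(k,l)} \<in> SW F \<longleftrightarrow> {(j,i),(l,k)} \<in> F"
  by (simp add: memSW)

lemma grid_SW: assumes "grid_graph a b E" shows "grid_graph b a (SW E)"
  unfolding grid_graph_def
proof
  fix e assume "e \<in> SW E"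
  then have "prod.swap ` e \<in> E" by (simp add: memSW)
  then obtain u v where uv: "prod.swap ` e = {u,v}" "u \<noteq> v" "u \<in> grid a b" "v \<in> grid a b"
    using assms unfolding grid_graph_def by meson
  have "e = {prod.swap u, prod.swap v}" using arg_cong[OF uv(1), of "image prod.swap"] by (simp add: swsw)
  moreover have "prod.swap u \<noteq> prod.swap v" using uv(2) by (metis swap_swap)
  moreover have "prod.swap u \<in> grid b a" "prod.swap v \<in> grid b a" using uv(3,4) unfolding grid_def by auto
  ultimately show "\<exists>u v. e = {u, v} \<and> u \<noteq> v \<and> u \<in> grid b a \<and> v \<in> grid b a" by blast
qed

lemma strat_SW: "col_stratified E \<Longrightarrow> row_stratified (SW E)"
  unfolding col_stratified_def row_stratified_def memSW2 by blast

lemma deg_SW: "degree (SW F) (prod.swap v) = degree F v"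
proof -
  have eq: "{e \<in> SW F. prod.swap v \<in> e} = (\<lambda>e. prod.swap ` e) ` {e\<in>F. v \<in> e}"
  proof (intro set_eqI iffI)
    fix e assume "e \<in> {e \<in> SW F. prod.swap v \<in> e}"
    then have "prod.swap ` e \<in> {e\<in>F. v \<in> e}" by (auto simp: memSW image_iff intro!: bexI[of _ "prod.swap v"])
    then show "e \<in> (\<lambda>e. prod.swap ` e) ` {e\<in>F. v \<in> e}" by (metis image_eqI swsw)
  next
    fix e assume "e \<in> (\<lambda>e. prod.swap ` e) ` {e\<in>F. v \<in> e}"
    then show "e \<in> {e \<in> SW F. prod.swap v \<in> e}" by (auto simp: memSW swsw)
  qed
  have inj: "inj_on (\<lambda>e. prod.swap ` e) {e\<in>F. v \<in> e}"
  proof (rule inj_onI)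
    fix x y :: "vertex set" assume "prod.swap ` x = prod.swap ` y"
    then have "prod.swap ` prod.swap ` x = prod.swap ` prod.swap ` y" by simp
    then show "x = y" by (simp only: swsw)
  qed
  have ci: "card ((\<lambda>e. prod.swap ` e) ` {e\<in>F. v \<in> e}) = card {e\<in>F. v \<in> e}"
    by (rule card_image[OF inj])
  show ?thesis unfolding degree_def eq by (rule ci)
qed

lemma PT_SW: "partial_transpose (SW F) = SW (partial_transpose F)"
proof (intro set_eqI iffI)
  fix x assume "x \<in> partial_transpose (SW F)"
  then obtain i j k l where "x = {(k,j),(i,l)}" "{(i,j),(k,l)} \<in> SW F"
    unfolding partial_transpose_def by blast
  then show "x \<in> SW (partial_transpose F)"
    unfolding partial_transpose_def memSW2 by (auto simp: memSW)
next
  fix x assume "x \<in> SW (partial_transpose F)"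
  then have "prod.swap ` x \<in> partial_transpose F" by (simp add: memSW)
  then obtain i j k l where h: "prod.swap ` x = {(k,j),(i,l)}" "{(i,j),(k,l)} \<in> F"
    unfolding partial_transpose_def by blast
  have "x = {(j,k),(l,i)}" using arg_cong[OF h(1), of "image prod.swap"] by (simp add: swsw)
  moreover have "{(j,i),(l,k)} \<in> SW F" using h(2) by (simp add: memSW2)
  ultimately show "x \<in> partial_transpose (SW F)" unfolding partial_transpose_def by blast
qed

lemma crit_SW: assumes "degree_criterion a b F" shows "degree_criterion b a (SW F)"
  unfolding degree_criterion_def
proof
  fix v assume "v \<in> grid b a"
  then have "prod.swap v \<in> grid a b" unfolding grid_def by (cases v) auto
  then have "degree F (prod.swap v) = degree (partial_transpose F) (prod.swap v)"
    using assms unfolding degree_criterion_def by blast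
  then show "degree (SW F) v = degree (partial_transpose (SW F)) v"
    using deg_SW[of F "prod.swap v"] deg_SW[of "partial_transpose F" "prod.swap v"]
    by (simp add: PT_SW)
qed

lemma diag_SW: "diagonal (prod.swap ` e) \<longleftrightarrow> diagonal e"
  unfolding diagonal_def
proof
  assume "\<exists>i j k l. prod.swap ` e = {(i, j), (k, l)} \<and> i \<noteq> k \<and> j \<noteq> l"
  then obtain i j k l where h: "prod.swap ` e = {(i, j), (k, l)}" "i \<noteq> k" "j \<noteq> l" by blast
  have "e = {(j,i),(l,k)}" using arg_cong[OF h(1), of "image prod.swap"] by (simp add: swsw)
  then show "\<exists>i j k l. e = {(i, j), (k, l)} \<and> i \<noteq> k \<and> j \<noteq> l" using h by blast
next
  assume "\<exists>i j k l. e = {(i, j), (k, l)} \<and> i \<noteq> k \<and> j \<noteq> l"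
  then obtain i j k l where h: "e = {(i, j), (k, l)}" "i \<noteq> k" "j \<noteq> l" by blast
  then show "\<exists>i j k l. prod.swap ` e = {(i, j), (k, l)} \<and> i \<noteq> k \<and> j \<noteq> l" by auto
qed

lemma col_eq: "col_slice E j = SW (row_slice (SW E) j)"
proof (intro set_eqI)
  fix e :: "vertex set"
  have "(\<exists>x y. prod.swap ` e = {(j,x),(j+1,y)}) \<longleftrightarrow> (\<exists>i k. e = {(i,j),(k,j+1)})"
  proof
    assume "\<exists>x y. prod.swap ` e = {(j,x),(j+1,y)}"
    then obtain x y where h: "prod.swap ` e = {(j,x),(j+1,y)}" by blast
    have "e = {(x,j),(y,j+1)}" using arg_cong[OF h, of "image prod.swap"] by (simp add: swsw)
    then show "\<exists>i k. e = {(i,j),(k,j+1)}" by blast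
  next
    assume "\<exists>i k. e = {(i,j),(k,j+1)}"
    then obtain i k where "e = {(i,j),(k,j+1)}" by blast
    then show "\<exists>x y. prod.swap ` e = {(j,x),(j+1,y)}" by (intro exI[of _ i] exI[of _ k]) simp
  qed
  then show "e \<in> col_slice E j \<longleftrightarrow> e \<in> SW (row_slice (SW E) j)"
    unfolding col_slice_def row_slice_def memSW mem_Collect_eq diag_SW swsw by blast
qed

theorem mainTheorem9:
  fixes a b :: nat and E :: edgeset
  assumes "grid_graph a b E"
  shows "(row_stratified E \<and> degree_criterion a b E \<longrightarrow>
            (\<forall>i. 1 \<le> i \<and> i < a \<longrightarrow> degree_criterion a b (row_slice E i)))
       \<and> (col_stratified E \<and> degree_criterion a b E \<longrightarrow>
            (\<forall>j. 1 \<le> j \<and> j < b \<longrightarrow> degree_criterion a b (col_slice E j)))"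
proof (intro conjI impI allI)
  fix i assume "row_stratified E \<and> degree_criterion a b E" "1 \<le> i \<and> i < a"
  then show "degree_criterion a b (row_slice E i)" using row_part[OF assms] by blast
next
  fix j assume h: "col_stratified E \<and> degree_criterion a b E" "1 \<le> j \<and> j < b"
  have "degree_criterion b a (row_slice (SW E) j)"
    using row_part[OF grid_SW[OF assms] strat_SW crit_SW] h by blast
  then have "degree_criterion a b (SW (row_slice (SW E) j))" by (rule crit_SW)
  then show "degree_criterion a b (col_slice E j)" by (simp add: col_eq)
qed

end
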